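(* Let $\xi<-6$. There exists $\phi_0\in(0,\pi/4]$ such that for every $\phi\in(0,\phi_0]$ there is a constant $c=c(\xi,\phi)>0$ with the following property: for $z=|z|e^{\mathrm{i}w}$, $$\operatorname{Re}[2\mathrm{i}\theta(z)]\ge c|\sin w|(|z|^{-1}-|z|)\quad\text{for } z\in\Omega_{01}\cup\Omega_{02},$$ $$\operatorname{Re}[2\mathrm{i}\theta(z)]\le -c|\sin w|(|z|^{-1}-|z|)\quad\text{for } z\in\Omega_{03}\cup\Omega_{04}.$$
   Context: $\theta(z)=\frac12(z+z^{-1})\big[\xi-2+(z-z^{-1})^2\big]$. For $\xi<-6$ let $\zeta_1=\sqrt{(-\xi-\sqrt{\xi^2-36})/6}\in(0,1)$ (the smallest positive stationary point of $\theta$). Writing $z=u+\mathrm{i}v$, the regions are $\Omega_{01}=\{0<u<\zeta_1/2,\ 0<v<u\tan\phi\}$, $\Omega_{02}=\{-\zeta_1/2<u<0,\ 0<v<|u|\tan\phi\}$, $\Omega_{03}=\{-\zeta_1/2<u<0,\ -|u|\tan\phi<v<0\}$, $\Omega_{04}=\{0<u<\zeta_1/2,\ -u\tan\phi<v<0\}$. *)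

theory Defs
  imports "HOL-Complex_Analysis.Complex_Analysis"
begin

definition theta :: "real \<Rightarrow> complex \<Rightarrow> complex" where
  "theta \<xi> z = (1/2) * (z + inverse z) * (complex_of_real \<xi> - 2 + (z - inverse z)^2)"

definition zeta1 :: "real \<Rightarrow> real" where
  "zeta1 \<xi> = sqrt ((- \<xi> - sqrt (\<xi>^2 - 36)) / 6)"

definition Omega01 :: "real \<Rightarrow> real \<Rightarrow> complex set" where
  "Omega01 \<xi> \<phi> = {z. 0 < Re z \<and> Re z < zeta1 \<xi> / 2 \<and> 0 < Im z \<and> Im z < Re z * tan \<phi>}"

definition Omega02 :: "real \<Rightarrow> real \<Rightarrow> complex set" where
  "Omega02 \<xi> \<phi> = {z. - zeta1 \<xi> / 2 < Re z \<and> Re z < 0 \<and> 0 < Im z \<and> Im z < \<bar>Re z\<bar> * tan \<phi>}"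

definition Omega03 :: "real \<Rightarrow> real \<Rightarrow> complex set" where
  "Omega03 \<xi> \<phi> = {z. - zeta1 \<xi> / 2 < Re z \<and> Re z < 0 \<and> - \<bar>Re z\<bar> * tan \<phi> < Im z \<and> Im z < 0}"

definition Omega04 :: "real \<Rightarrow> real \<Rightarrow> complex set" where
  "Omega04 \<xi> \<phi> = {z. 0 < Re z \<and> Re z < zeta1 \<xi> / 2 \<and> - Re z * tan \<phi> < Im z \<and> Im z < 0}"

end

theory Submission imports Defs begin
lemma ident:
  fixes u v xi :: real
  assumes "u^2+v^2 > 0"
  shows "Re (2 * \<i> * theta xi (Complex u v)) = v * (1 - (u^2+v^2)) / (u^2+v^2) *
     (((u^2+v^2) + 2 + 1/(u^2+v^2)) * (3 - 4 * v^2/(u^2+v^2)) - 4 + 4 * v^2/(u^2+v^2) + xi - 2)"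
proof -
  define p where "p = u^2+v^2"
  have p: "p > 0" using assms p_def by simp
  have uu: "u * u = p - v * v" by (simp add: p_def power2_eq_square)
  have uu2: "u * (u * x) = (p - v * v) * x" for x using uu by (metis mult.assoc)
  have inv: "inverse (Complex u v) = Complex (u/p) (-v/p)"
    by (simp add: inverse_complex.code p_def power2_eq_square)
  have "Re (2 * \<i> * theta xi (Complex u v)) = - (v * (p - 1) / p) * (2 * (p + 1)^2 * u * u / p / p + (xi - 2 + (u * u * (p - 1)^2 - v * v * (p + 1)^2) / p / p))"
    unfolding theta_def inv
    using p by (simp add: power2_eq_square field_simps)
  also have "\<dots> = v * (1 - p) / p *
     ((p + 2 + 1/p) * (3 - 4 * v^2/p) - 4 + 4 * v^2/p + xi - 2)"
    using p by (simp add: power2_eq_square field_simps) (simp add: algebra_simps uu2)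
  finally show ?thesis unfolding p_def .
qed
lemma sinarg: "cmod z * sin (Arg z) = Im z"
  using arg_cong[where f=Im, OF rcis_cmod_Arg[of z]] by (simp add: rcis_def cis.sel)

lemma core:
  fixes u v xi T eta tp :: real
  defines "t0 \<equiv> T / 2"
  defines "K0 \<equiv> t0 + 2 + 1 / t0"
  defines "d \<equiv> 3 * t0 + 3 / t0 + xi"
  defines "p \<equiv> u^2 + v^2"
  assumes T: "0 < T" "T < 1" and u: "u^2 < T / 4" and v: "v \<noteq> 0"
    and uv: "\<bar>v\<bar> < \<bar>u\<bar> * tp" and tp: "0 < tp" "tp \<le> d / (8 * K0)" "d / (8 * K0) < 1"
    and d: "d < 3 * K0" "0 < d"
  shows "0 < p \<and> p < 1 \<and> d / 2 \<le> (p + 2 + 1/p) * (3 - 4 * v^2/p) - 4 + 4 * v^2/p + xi - 2"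
proof -
  define eta where "eta = d / (8 * K0)"
  have t0: "0 < t0" "t0 < 1" using T t0_def by auto
  have K0: "K0 > 0" using t0 unfolding K0_def by (simp add: add_pos_pos)
  have eta: "0 < eta" "eta < 1" using tp eta_def by auto
  have u0: "u \<noteq> 0" using uv v by auto
  have tp2: "tp^2 \<le> eta" using tp eta_def eta
    by (smt (verit, ccfv_SIG) mult_le_cancel_left1 power2_eq_square)
  have vv: "v^2 < u^2 * tp^2"
  proof -
    have "v^2 = \<bar>v\<bar>^2" by simp
    also have "\<dots> < (\<bar>u\<bar> * tp)^2" using uv v by (intro power_strict_mono) auto
    finally show ?thesis by (simp add: power_mult_distrib)
  qed
  have vv2: "v^2 < u^2" using vv tp2 eta u0
    by (smt (verit, best) mult_left_le mult_pos_pos zero_less_power2 )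
  have p0: "0 < p" using u0 p_def by (simp add: add_pos_nonneg)
  have pt0: "p < t0" using vv2 u p_def t0_def by simp
  have s2: "v^2 / p \<le> eta"
  proof -
    have "v^2 / p \<le> v^2 / u^2" using p_def u0 p0 by (intro divide_left_mono) auto
    also have "\<dots> \<le> tp^2" using vv u0 by (simp add: divide_simps mult.commute)
    finally show ?thesis using tp2 by simp
  qed
  have pK: "K0 \<le> p + 2 + 1/p"
  proof -
    have "(t0 - p) * (1 - 1 / (p * t0)) \<le> 0"
    proof (rule mult_nonneg_nonpos)
      show "0 \<le> t0 - p" using pt0 by simp
      have "p * t0 < 1" using pt0 t0 p0 by (smt (verit) mult_less_cancel_right1 mult_strict_mono)
      then show "1 - 1 / (p * t0) \<le> 0" using p0 t0 by (simp add: field_simps)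
    qed
    then have "t0 + 1/t0 \<le> p + 1/p" using p0 t0 by (simp add: field_simps)
    then show ?thesis using K0_def by simp
  qed
  have e38: "eta < 3/8" using d K0 by (simp add: eta_def field_simps)
  have pos: "0 \<le> 3 - 4 * v^2/p" using s2 e38 by simp
  have "K0 * (3 - 4 * v^2/p) \<le> (p + 2 + 1/p) * (3 - 4 * v^2/p)"
    using pK pos by (intro mult_right_mono) auto
  moreover have "K0 * (3 - 4 * eta) \<le> K0 * (3 - 4 * v^2/p)"
    using s2 K0 by (intro mult_left_mono) auto
  moreover have "K0 * (3 - 4 * eta) = 3 * K0 - d / 2" using K0 eta_def by (simp add: field_simps)
  moreover have "0 \<le> v^2 / p" using p0 by simp
  moreover have "3 * K0 - d / 2 - 6 + xi = d / 2" using K0_def d_def by (simp add: field_simps)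
  ultimately show ?thesis using p0 pt0 t0 by linarith
qed

lemma point:
  fixes u v xi T tp c :: real
  defines "t0 \<equiv> T / 2"
  defines "K0 \<equiv> t0 + 2 + 1 / t0"
  defines "d \<equiv> 3 * t0 + 3 / t0 + xi"
  assumes T: "0 < T" "T < 1" and u: "u^2 < T / 4" and v: "v \<noteq> 0"
    and uv: "\<bar>v\<bar> < \<bar>u\<bar> * tp" and tp: "0 < tp" "tp \<le> d / (8 * K0)" "d / (8 * K0) < 1"
    and d: "d < 3 * K0" "0 < d"
  shows "(0 < v \<longrightarrow> Re (2 * \<i> * theta xi (Complex u v)) \<ge> d/2 * \<bar>sin (Arg (Complex u v))\<bar> * (1 / cmod (Complex u v) - cmod (Complex u v)))
       \<and> (v < 0 \<longrightarrow> Re (2 * \<i> * theta xi (Complex u v)) \<le> - (d/2) * \<bar>sin (Arg (Complex u v))\<bar> * (1 / cmod (Complex u v) - cmod (Complex u v)))"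
proof -
  define p where "p = u^2 + v^2"
  define F where "F = (p + 2 + 1/p) * (3 - 4 * v^2/p) - 4 + 4 * v^2/p + xi - 2"
  have C: "0 < p \<and> p < 1 \<and> d / 2 \<le> F"
    using core[OF T u v uv tp[unfolded d_def K0_def t0_def] d[unfolded d_def K0_def t0_def]]
    unfolding p_def F_def d_def K0_def t0_def by blast
  have id: "Re (2 * \<i> * theta xi (Complex u v)) = v * (1 - p) / p * F"
    using ident[of u v xi] C unfolding p_def F_def by simp
  have cm: "cmod (Complex u v) = sqrt p" by (simp add: cmod_def p_def)
  have sp: "sqrt p > 0" using C by simp
  have sn: "sin (Arg (Complex u v)) = v / sqrt p"
    using sinarg[of "Complex u v"] cm sp by (simp add: field_simps)
  have rhs: "\<bar>sin (Arg (Complex u v))\<bar> * (1 / cmod (Complex u v) - cmod (Complex u v)) = \<bar>v\<bar> * (1 - p) / p"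
    unfolding sn cm using sp C by (simp add: field_simps abs_div)
  have w: "0 \<le> (1 - p) / p" using C by simp
  show ?thesis
  proof (intro conjI impI)
    assume "0 < v"
    then have "v * (1 - p) / p * (d/2) \<le> v * (1 - p) / p * F"
      using w C by (intro mult_left_mono) auto
    then show "Re (2 * \<i> * theta xi (Complex u v)) \<ge> d/2 * \<bar>sin (Arg (Complex u v))\<bar> * (1 / cmod (Complex u v) - cmod (Complex u v))"
      unfolding id mult.assoc[of "d/2"] rhs using \<open>0 < v\<close> by (simp add: algebra_simps)
  next
    assume "v < 0"
    have nn: "0 \<le> (-v) * ((1 - p) / p)" using w \<open>v < 0\<close> by (intro mult_nonneg_nonneg) auto
    have "(-v) * ((1 - p) / p) * (d/2) \<le> (-v) * ((1 - p) / p) * F"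
      using nn C by (intro mult_left_mono) auto
    then show "Re (2 * \<i> * theta xi (Complex u v)) \<le> - (d/2) * \<bar>sin (Arg (Complex u v))\<bar> * (1 / cmod (Complex u v) - cmod (Complex u v))"
    proof -
      have e1: "- (d/2) * (\<bar>v\<bar> * (1 - p) / p) = - ((-v) * ((1 - p) / p) * (d/2))"
        using \<open>v < 0\<close> by (simp add: algebra_simps)
      have e2: "v * (1 - p) / p * F = - ((-v) * ((1 - p) / p) * F)" by simp
      show ?thesis unfolding id mult.assoc[of "- (d/2)"] rhs e1 e2 using \<open>(-v) * ((1 - p) / p) * (d/2) \<le> (-v) * ((1 - p) / p) * F\<close> by linarith
    qed
  qed
qed

lemma xi_facts:
  fixes \<xi> :: real
  assumes "\<xi> < -6"
  shows "0 < zeta1 \<xi> ^2 \<and> zeta1 \<xi> ^2 < 1 \<and> 3 * (zeta1 \<xi> ^2)^2 + \<xi> * zeta1 \<xi> ^2 + 3 = 0"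
proof -
  define S where "S = sqrt (\<xi>^2 - 36)"
  define T where "T = (- \<xi> - S) / 6"
  have x36: "36 < \<xi>^2"
  proof -
    have "(6::real)^2 < (-\<xi>)^2" using assms by (intro power_strict_mono) auto
    then show ?thesis by simp
  qed
  have S2: "S^2 = \<xi>^2 - 36" unfolding S_def using x36 by simp
  have S0: "0 \<le> S" using x36 S_def by simp
  have T0: "0 < T"
  proof -
    have "S^2 < (- \<xi>)^2" using S2 by simp
    moreover have "0 \<le> - \<xi>" using assms by simp
    ultimately have "S < - \<xi>" by (rule power2_less_imp_less)
    then show ?thesis unfolding T_def by simp
  qed
  have T1: "T < 1"
  proof -
    have "(-\<xi> - 6)^2 < S^2" unfolding S2 using assms by (simp add: power2_eq_square algebra_simps)
    then have "-\<xi> - 6 < S" using S0 by (rule power2_less_imp_less)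
    then show ?thesis unfolding T_def by simp
  qed
  have Tq: "3 * T^2 + \<xi> * T + 3 = 0"
  proof -
    have "36 * (3 * T^2 + \<xi> * T + 3) = 3 * (\<xi> + S)^2 - 6 * \<xi> * (\<xi> + S) + 108"
      unfolding T_def by (simp add: power2_eq_square field_simps)
    also have "\<dots> = 3 * S^2 - 3 * \<xi>^2 + 108" by (simp add: power2_eq_square algebra_simps)
    also have "\<dots> = 0" using S2 by simp
    finally show ?thesis by simp
  qed
  have zT: "zeta1 \<xi> ^2 = T" unfolding zeta1_def T_def[symmetric] S_def[symmetric] using T0 by simp
  show ?thesis using zT T0 T1 Tq by simp
qed

theorem mainTheorem3:
  fixes \<xi> :: real
  assumes "\<xi> < -6"
  shows "\<exists>\<phi>0. 0 < \<phi>0 \<and> \<phi>0 \<le> pi / 4 \<and>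
    (\<forall>\<phi>. 0 < \<phi> \<and> \<phi> \<le> \<phi>0 \<longrightarrow>
      (\<exists>c>0.
        (\<forall>z \<in> Omega01 \<xi> \<phi> \<union> Omega02 \<xi> \<phi>.
           Re (2 * \<i> * theta \<xi> z) \<ge> c * \<bar>sin (Arg z)\<bar> * (1 / cmod z - cmod z)) \<and>
        (\<forall>z \<in> Omega03 \<xi> \<phi> \<union> Omega04 \<xi> \<phi>.
           Re (2 * \<i> * theta \<xi> z) \<le> - c * \<bar>sin (Arg z)\<bar> * (1 / cmod z - cmod z))))"
proof -
  define T where "T = zeta1 \<xi> ^2"
  have T0: "0 < T" and T1: "T < 1" and Tq: "3 * T^2 + \<xi> * T + 3 = 0"
    using xi_facts[OF assms] unfolding T_def by auto
  define t0 where "t0 = T / 2"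
  define K0 where "K0 = t0 + 2 + 1 / t0"
  define d where "d = 3 * t0 + 3 / t0 + \<xi>"
  define eta where "eta = d / (8 * K0)"
  have t0: "0 < t0" "t0 < 1" using T0 T1 t0_def by auto
  have K0: "0 < K0" using t0 unfolding K0_def by (simp add: add_pos_pos)
  have d0: "0 < d"
  proof -
    have "d * t0 = 3 * t0^2 + \<xi> * t0 + 3" using t0 unfolding d_def
      by (simp add: field_simps power2_eq_square)
    also have "\<dots> = (3 * T^2 + 2 * (\<xi> * T) + 12) / 4" unfolding t0_def by (simp add: field_simps power2_eq_square)
    also have "\<xi> * T = -3 * T^2 - 3" using Tq by linarith
    also have "(3 * T^2 + 2 * (-3 * T^2 - 3) + 12) / 4 = (6 - 3 * T^2) / 4" by simp
    finally have "d * t0 = (6 - 3 * T^2) / 4" .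
    moreover have "T^2 < 1" using T0 T1 by (simp add: power_less_one_iff)
    ultimately have "d * t0 > 0" by simp
    then show ?thesis using t0 by (simp add: zero_less_mult_iff)
  qed
  have d3: "d < 3 * K0" unfolding d_def K0_def using assms by simp
  have eta: "0 < eta" "eta < 1" using d0 d3 K0 unfolding eta_def by (auto simp: field_simps)
  define phi0 where "phi0 = arctan eta"
  have p0: "0 < phi0" unfolding phi0_def using eta by (metis arctan_less_iff arctan_zero_zero)
  have p4: "phi0 \<le> pi / 4" unfolding phi0_def using eta
    by (metis arctan_le_iff arctan_one less_imp_le)
  have p2: "phi0 < pi / 2" using p4 pi_gt_zero by linarith
  show ?thesis
  proof (rule exI[of _ phi0], intro conjI allI impI p0 p4)
    fix \<phi> assume ph: "0 < \<phi> \<and> \<phi> \<le> phi0"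
    define tp where "tp = tan \<phi>"
    have tp0: "0 < tp" unfolding tp_def using ph p2 by (intro tan_gt_zero) auto
    have tpe: "tp \<le> eta"
    proof -
      have "arctan tp = \<phi>" unfolding tp_def using ph p2 by (intro arctan_tan) auto
      then have "arctan tp \<le> arctan eta" using ph phi0_def by simp
      then show ?thesis by (simp add: arctan_le_iff)
    qed
    have u4: "u^2 < T / 4" if "\<bar>u\<bar> < zeta1 \<xi> / 2" for u
    proof -
      have "\<bar>u\<bar>^2 < (zeta1 \<xi> / 2)^2" using that by (intro power_strict_mono) auto
      then show ?thesis unfolding T_def by (simp add: power_divide)
    qed
    have P: "(0 < v \<longrightarrow> Re (2 * \<i> * theta \<xi> (Complex u v)) \<ge> d/2 * \<bar>sin (Arg (Complex u v))\<bar> * (1 / cmod (Complex u v) - cmod (Complex u v)))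
       \<and> (v < 0 \<longrightarrow> Re (2 * \<i> * theta \<xi> (Complex u v)) \<le> - (d/2) * \<bar>sin (Arg (Complex u v))\<bar> * (1 / cmod (Complex u v) - cmod (Complex u v)))"
      if "\<bar>u\<bar> < zeta1 \<xi> / 2" "v \<noteq> 0" "\<bar>v\<bar> < \<bar>u\<bar> * tp" for u v
    proof -
      have a1: "tp \<le> (3 * (T/2) + 3 / (T/2) + \<xi>) / (8 * ((T/2) + 2 + 1 / (T/2)))"
        using tpe unfolding eta_def d_def K0_def t0_def .
      have a2: "(3 * (T/2) + 3 / (T/2) + \<xi>) / (8 * ((T/2) + 2 + 1 / (T/2))) < 1"
        using eta unfolding eta_def d_def K0_def t0_def by simp
      have a3: "3 * (T/2) + 3 / (T/2) + \<xi> < 3 * ((T/2) + 2 + 1 / (T/2))"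
        using d3 unfolding d_def K0_def t0_def .
      have a4: "0 < 3 * (T/2) + 3 / (T/2) + \<xi>"
        using d0 unfolding d_def t0_def .
      show ?thesis using point[of T u v tp \<xi>, OF T0 T1 u4[OF that(1)] that(2) that(3) tp0 a1 a2 a3 a4]
        unfolding d_def t0_def .
    qed
    show "\<exists>c>0. (\<forall>z \<in> Omega01 \<xi> \<phi> \<union> Omega02 \<xi> \<phi>.
           Re (2 * \<i> * theta \<xi> z) \<ge> c * \<bar>sin (Arg z)\<bar> * (1 / cmod z - cmod z)) \<and>
        (\<forall>z \<in> Omega03 \<xi> \<phi> \<union> Omega04 \<xi> \<phi>.
           Re (2 * \<i> * theta \<xi> z) \<le> - c * \<bar>sin (Arg z)\<bar> * (1 / cmod z - cmod z))"
    proof (intro exI[of _ "d/2"] conjI ballI)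
      show "0 < d/2" using d0 by simp
    next
      fix z assume z: "z \<in> Omega01 \<xi> \<phi> \<union> Omega02 \<xi> \<phi>"
      have h: "\<bar>Re z\<bar> < zeta1 \<xi> / 2" "Im z \<noteq> 0" "\<bar>Im z\<bar> < \<bar>Re z\<bar> * tp" "0 < Im z"
        using z unfolding Omega01_def Omega02_def tp_def by auto
      then show "Re (2 * \<i> * theta \<xi> z) \<ge> d/2 * \<bar>sin (Arg z)\<bar> * (1 / cmod z - cmod z)"
        using P[OF h(1-3)] by simp
    next
      fix z assume z: "z \<in> Omega03 \<xi> \<phi> \<union> Omega04 \<xi> \<phi>"
      have h: "\<bar>Re z\<bar> < zeta1 \<xi> / 2" "Im z \<noteq> 0" "\<bar>Im z\<bar> < \<bar>Re z\<bar> * tp" "Im z < 0"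
        using z unfolding Omega03_def Omega04_def tp_def by auto
      then show "Re (2 * \<i> * theta \<xi> z) \<le> - (d/2) * \<bar>sin (Arg z)\<bar> * (1 / cmod z - cmod z)"
        using P[OF h(1-3)] by simp
    qed
  qed
qed

end
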